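(* Let $X$ be a random variable with values in $\{0,1,2,\dots\}$ with finite variance and mean $\mu=\mathrm{E}[X]>0$, and let $X_1,\dots,X_n$ be i.i.d. copies of $X$. With $\overline X_n$ the sample mean, $F_n(k)=\frac1n\sum_{i=1}^nI(X_i\le k)$, $f_k(m)=e^{-m}\sum_{j=0}^k\frac{m^j}{j!}$, $$\widetilde\sigma^2_{n,k}=e^{-2\overline X_n}\Big\{\Big(\sum_{j=0}^k\frac{\overline X_n^j}{j!}\Big)\Big(e^{\overline X_n}-\sum_{j=0}^k\frac{\overline X_n^j}{j!}\Big)-\frac{\overline X_n^{2k+1}}{(k!)^2}\Big\},$$ $\widetilde\sigma_{n,k}=\sqrt{\widetilde\sigma^2_{n,k}}$, define $$k_n^*=\min\Big\{k\ge 0:\ I(\overline X_n\ge 1)\,\frac{\widetilde\sigma_{n,k}}{f_k^2(\overline X_n)\sqrt n}\le e\Big\},\qquad W_n=\frac{\sqrt n\,\{f_{k_n^*}(\overline X_n)-F_n(k_n^* )\}}{\widetilde\sigma_{n,k_n^*}}.$$ If $X$ is Poisson with parameter $\mu$ (hypothesis $H_0$), then $W_n$ converges in distribution to $\mathcal N(0,1)$ as $n\to\infty$. If the distribution of $X$ belongs to $\Delta$ and is not Poisson (hypothesis $H_1$), then $|W_n|$ converges in probability to $\infty$.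
   Context: $\Delta$ denotes the class of distributions of random variables $X$ with values in $\{0,1,2,\dots\}$ such that, for every $\mu>0$, the function $t\mapsto \Psi_X'(t)-\mu\Psi_X(t)$ is either nonnegative for all $t\in[0,1]$ or nonpositive for all $t\in[0,1]$, where $\Psi_X(t)=\mathrm{E}[t^X]$. $I(\cdot)$ is the indicator function. *)

theory Defs
  imports "HOL-Probability.Probability"
begin

definition pgf :: "nat pmf \<Rightarrow> real \<Rightarrow> real" where
  "pgf p t = (\<Sum>k. pmf p k * t ^ k)"

definition pgf_deriv :: "nat pmf \<Rightarrow> real \<Rightarrow> real" where
  "pgf_deriv p t = (\<Sum>k. real (Suc k) * pmf p (Suc k) * t ^ k)"

definition in_Delta :: "nat pmf \<Rightarrow> bool" where
  "in_Delta p \<longleftrightarrow> (\<forall>\<mu>>0. (\<forall>t\<in>{0..1}. pgf_deriv p t - \<mu> * pgf p t \<ge> 0)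
                          \<or> (\<forall>t\<in>{0..1}. pgf_deriv p t - \<mu> * pgf p t \<le> 0))"

definition sample_mean :: "(nat \<Rightarrow> 'a \<Rightarrow> nat) \<Rightarrow> nat \<Rightarrow> 'a \<Rightarrow> real" where
  "sample_mean X n \<omega> = (\<Sum>i<n. real (X i \<omega>)) / real n"

definition emp_cdf :: "(nat \<Rightarrow> 'a \<Rightarrow> nat) \<Rightarrow> nat \<Rightarrow> nat \<Rightarrow> 'a \<Rightarrow> real" where
  "emp_cdf X n k \<omega> = (\<Sum>i<n. if X i \<omega> \<le> k then 1 else 0) / real n"

definition fk :: "nat \<Rightarrow> real \<Rightarrow> real" where
  "fk k m = exp (- m) * (\<Sum>j\<le>k. m ^ j / fact j)"

definition sig2 :: "nat \<Rightarrow> real \<Rightarrow> real" where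
  "sig2 k m = exp (- 2 * m) *
     ((\<Sum>j\<le>k. m ^ j / fact j) * (exp m - (\<Sum>j\<le>k. m ^ j / fact j))
      - m ^ (2 * k + 1) / (fact k)\<^sup>2)"

definition kstar :: "nat \<Rightarrow> real \<Rightarrow> nat" where
  "kstar n m = (LEAST k. (if m \<ge> 1 then 1 else 0) * sqrt (sig2 k m)
                           / ((fk k m)\<^sup>2 * sqrt (real n)) \<le> exp 1)"

definition W_stat :: "(nat \<Rightarrow> 'a \<Rightarrow> nat) \<Rightarrow> nat \<Rightarrow> 'a \<Rightarrow> real" where
  "W_stat X n \<omega> =
     (let m = sample_mean X n \<omega>; k = kstar n m in
      sqrt (real n) * (fk k m - emp_cdf X n k \<omega>) / sqrt (sig2 k m))"

definition abs_tends_to_infinity_in_prob :: "'a measure \<Rightarrow> (nat \<Rightarrow> 'a \<Rightarrow> real) \<Rightarrow> bool" where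
  "abs_tends_to_infinity_in_prob M Y \<longleftrightarrow>
     (\<forall>C::real. (\<lambda>n. measure M {\<omega> \<in> space M. \<bar>Y n \<omega>\<bar> \<le> C}) \<longlonglongrightarrow> 0)"

end

theory Submission
  imports Defs
begin


lemma pmf_integrable_iff:
  fixes p :: "nat pmf" and f :: "nat \<Rightarrow> real"
  shows "integrable (measure_pmf p) f \<longleftrightarrow> summable (\<lambda>k. pmf p k * \<bar>f k\<bar>)"
  by (simp add: measure_pmf_eq_density integrable_density integrable_count_space_nat_iff abs_mult)

lemma pmf_integral_sums:
  fixes p :: "nat pmf" and f :: "nat \<Rightarrow> real"
  assumes "integrable (measure_pmf p) f"
  shows "(\<lambda>k. pmf p k * f k) sums (measure_pmf.expectation p f)"
proof -
  have "integrable (count_space UNIV) (\<lambda>k. pmf p k * f k)"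
    using assms by (simp add: measure_pmf_eq_density integrable_density)
  then have "(\<lambda>k. pmf p k * f k) sums (integral\<^sup>L (count_space UNIV) (\<lambda>k. pmf p k * f k))"
    by (rule sums_integral_count_space_nat)
  moreover have "measure_pmf.expectation p f = integral\<^sup>L (count_space UNIV) (\<lambda>k. pmf p k * f k)"
    by (simp add: measure_pmf_eq_density integral_density)
  ultimately show ?thesis by simp
qed



lemma powser_unique0:
  fixes c :: "nat \<Rightarrow> real"
  assumes sc: "summable c" and z: "\<And>t. 0 < t \<Longrightarrow> t < 1 \<Longrightarrow> (\<lambda>k. c k * t^k) sums 0"
  shows "c j = 0"
proof (induction j rule: less_induct)
  case (less j)
  define F where "F t = (\<Sum>k. c (k + j) * t ^ k)" for t :: real
  have F0: "\<And>t. 0 < t \<Longrightarrow> t < 1 \<Longrightarrow> F t = 0"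
  proof -
    fix t :: real assume t: "0 < t" "t < 1"
    have "(\<lambda>k. c (k + j) * t ^ (k + j)) sums (0 - (\<Sum>i<j. c i * t ^ i))"
      using sums_split_initial_segment[OF z[OF t], of j] by simp
    also have "(\<Sum>i<j. c i * t ^ i) = 0" using less by simp
    finally have "(\<lambda>k. (c (k + j) * t ^ k) * t ^ j) sums 0"
      by (simp add: power_add mult.assoc)
    then have "(\<lambda>k. (c (k + j) * t ^ k) * t ^ j * (1 / t ^ j)) sums (0 * (1 / t^j))"
      by (rule sums_mult2)
    then have "(\<lambda>k. c (k + j) * t ^ k) sums 0" using t by simp
    then show "F t = 0" unfolding F_def by (simp add: sums_iff)
  qed
  have sm: "summable (\<lambda>k. c (k + j) * 1 ^ k)"
    using summable_ignore_initial_segment[OF sc, of j] by simp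
  have "isCont F 0" unfolding F_def
    by (rule isCont_powser[OF sm]) simp
  then have "(F \<longlongrightarrow> F 0) (at_right 0)"
    by (simp add: isCont_def filterlim_at_split)
  moreover have "(F \<longlongrightarrow> 0) (at_right 0)"
  proof (rule Lim_transform_eventually[of "\<lambda>_. 0"])
    show "\<forall>\<^sub>F x in at_right 0. 0 = F x"
      unfolding eventually_at_right_field
      by (intro exI[of _ 1]) (auto simp: F0)
  qed simp
  ultimately have "F 0 = 0" by (rule tendsto_unique[rotated]) simp
  then show ?case unfolding F_def by simp
qed

lemma pgf_sums:
  fixes p :: "nat pmf" and t :: real
  assumes "\<bar>t\<bar> \<le> 1"
  shows "(\<lambda>k. pmf p k * t ^ k) sums pgf p t"
proof -
  have s1: "summable (pmf p)"
    using pmf_integral_sums[of p "\<lambda>_. 1"] by (auto simp: sums_iff)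
  have "summable (\<lambda>k. pmf p k * t ^ k)"
    by (rule summable_comparison_test[OF _ s1])
       (auto intro!: exI[of _ 0] simp: abs_mult power_abs intro!: mult_left_le power_le_one assms)
  then show ?thesis unfolding pgf_def by (simp add: summable_sums)
qed

lemma pmf_sums_one: "(\<lambda>k. pmf (p::nat pmf) k) sums 1"
  using pmf_integral_sums[of p "\<lambda>_. 1"] by simp

lemma pgf_continuous: "continuous_on {0..1} (pgf p)"
proof -
  have "uniform_limit {0..1} (\<lambda>n x. \<Sum>i<n. pmf p i * x ^ i) (\<lambda>x. suminf (\<lambda>i. pmf p i * x ^ i)) sequentially"
    by (rule Weierstrass_m_test[where M="pmf p"])
       (auto simp: abs_mult intro!: mult_left_le power_le_one pmf_sums_one[THEN sums_summable])
  then have "continuous_on {0..1} (\<lambda>x. suminf (\<lambda>i. pmf p i * x ^ i))"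
    by (rule uniform_limit_theorem[rotated]) (auto intro!: always_eventually continuous_intros)
  then show ?thesis unfolding pgf_def[abs_def] .
qed

lemma pgf_deriv:
  fixes t :: real assumes "\<bar>t\<bar> < 1"
  shows "(pgf p has_real_derivative pgf_deriv p t) (at t)"
proof -
  have "summable (\<lambda>n. pmf p n * 1 ^ n)" using pmf_sums_one[THEN sums_summable] by simp
  from termdiffs_strong[OF this, of t] assms
  show ?thesis unfolding pgf_def[abs_def] pgf_deriv_def diffs_def by simp
qed

lemma pgf_one: "pgf p 1 = 1"
  using pmf_sums_one[of p] unfolding pgf_def by (simp add: sums_iff)

lemma pgf_zero: "pgf p 0 = pmf p 0"
  unfolding pgf_def by (metis powser_zero)

lemma pgf_deriv_one:
  assumes "integrable (measure_pmf p) real"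
  shows "pgf_deriv p 1 = measure_pmf.expectation p real"
proof -
  have "(\<lambda>k. pmf p k * real k) sums measure_pmf.expectation p real"
    by (rule pmf_integral_sums[OF assms])
  then have "(\<lambda>k. pmf p (Suc k) * real (Suc k)) sums measure_pmf.expectation p real"
    by (subst sums_Suc_iff) simp
  then show ?thesis unfolding pgf_deriv_def by (simp add: sums_iff mult.commute)
qed



lemma Delta_poisson:
  fixes p :: "nat pmf" and \<mu> :: real
  assumes D: "in_Delta p" and int: "integrable (measure_pmf p) real"
    and mu: "measure_pmf.expectation p real = \<mu>" and mupos: "\<mu> > 0"
    and p0: "pmf p 0 = exp (- \<mu>)"
  shows "p = poisson_pmf \<mu>"
proof -
  define h where "h t = exp (- \<mu> * t) * pgf p t" for t
  have hd: "DERIV h t :> exp (- \<mu> * t) * (pgf_deriv p t - \<mu> * pgf p t)" if "0 < t" "t < 1" for t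
  proof -
    have "\<bar>t\<bar> < 1" using that by simp
    from pgf_deriv[OF this, of p] have "DERIV h t :> (exp (- \<mu> * t) * (- \<mu>)) * pgf p t + exp (- \<mu> * t) * pgf_deriv p t"
      unfolding h_def[abs_def] by (auto intro!: derivative_eq_intros)
    then show ?thesis by (simp add: algebra_simps)
  qed
  have hc: "continuous_on {a..b} h" if "0 \<le> a" "b \<le> 1" for a b
    unfolding h_def[abs_def]
    by (intro continuous_intros continuous_on_subset[OF pgf_continuous]) (use that in auto)
  have h0: "h 0 = exp (- \<mu>)" unfolding h_def by (simp add: pgf_zero p0)
  have h1: "h 1 = exp (- \<mu>)" unfolding h_def by (simp add: pgf_one)
  have hconst: "h t = exp (- \<mu>)" if t: "0 \<le> t" "t \<le> 1" for t
  proof -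
    from D mupos have "(\<forall>t\<in>{0..1}. pgf_deriv p t - \<mu> * pgf p t \<ge> 0)
                          \<or> (\<forall>t\<in>{0..1}. pgf_deriv p t - \<mu> * pgf p t \<le> 0)"
      unfolding in_Delta_def by blast
    then show ?thesis
    proof
      assume pos: "\<forall>t\<in>{0..1}. pgf_deriv p t - \<mu> * pgf p t \<ge> 0"
      have "h a \<le> h b" if "0 \<le> a" "a \<le> b" "b \<le> 1" for a b
        proof (rule DERIV_nonneg_imp_increasing_open[OF \<open>a \<le> b\<close> _ hc])
          fix x assume x: "a < x" "x < b"
          with that have "0 < x" "x < 1" "x \<in> {0..1}" by auto
          with pos hd[of x] show "\<exists>y. DERIV h x :> y \<and> y \<ge> 0"
            by (intro exI[of _ "exp (- \<mu> * x) * (pgf_deriv p x - \<mu> * pgf p x)"]) (auto intro!: mult_nonneg_nonneg)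
        qed (use that in auto)
      from this[of 0 t] this[of t 1] t h0 h1 show ?thesis by auto
    next
      assume neg: "\<forall>t\<in>{0..1}. pgf_deriv p t - \<mu> * pgf p t \<le> 0"
      have "h a \<ge> h b" if "0 \<le> a" "a \<le> b" "b \<le> 1" for a b
        proof (rule DERIV_nonpos_imp_decreasing_open[OF \<open>a \<le> b\<close> _ hc])
          fix x assume x: "a < x" "x < b"
          with that have "0 < x" "x < 1" "x \<in> {0..1}" by auto
          with neg hd[of x] show "\<exists>y. DERIV h x :> y \<and> y \<le> 0"
            by (intro exI[of _ "exp (- \<mu> * x) * (pgf_deriv p x - \<mu> * pgf p x)"]) (auto intro!: mult_nonneg_nonpos)
        qed (use that in auto)
      from this[of 0 t] this[of t 1] t h0 h1 show ?thesis by auto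
    qed
  qed
  define c where "c k = pmf p k - exp (- \<mu>) * (\<mu> ^ k / fact k)" for k
  have es: "(\<lambda>k. exp (- \<mu>) * (\<mu> ^ k / fact k) * t ^ k) sums (exp (- \<mu>) * exp (\<mu> * t))" for t
  proof -
    have "(\<lambda>k. exp (- \<mu>) * ((\<mu> * t) ^ k /\<^sub>R fact k)) sums (exp (- \<mu>) * exp (\<mu> * t))"
      by (rule sums_mult[OF exp_converges])
    then show ?thesis by (simp add: power_mult_distrib divide_simps mult_ac)
  qed
  have "summable c" unfolding c_def
    using es[of 1] by (intro summable_diff pmf_sums_one[THEN sums_summable]) (auto dest: sums_summable)
  moreover have "(\<lambda>k. c k * t ^ k) sums 0" if "0 < t" "t < 1" for t
  proof -
    have "pgf p t = exp (- \<mu>) * exp (\<mu> * t)"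
      using hconst[of t] that unfolding h_def by (simp add: exp_minus field_simps)
    moreover have "(\<lambda>k. pmf p k * t ^ k) sums pgf p t" by (rule pgf_sums) (use that in auto)
    ultimately have "(\<lambda>k. pmf p k * t ^ k - exp (- \<mu>) * (\<mu> ^ k / fact k) * t ^ k) sums (pgf p t - pgf p t)"
      using es[of t] by (intro sums_diff) auto
    then show ?thesis unfolding c_def by (simp add: algebra_simps)
  qed
  ultimately have "c k = 0" for k by (rule powser_unique0)
  then have "pmf p k = pmf (poisson_pmf \<mu>) k" for k
    using mupos unfolding c_def by (simp add: pmf_poisson field_simps)
  then show ?thesis by (rule pmf_eqI)
qed



locale iid = prob_space M for M :: "'a measure" +
  fixes X :: "nat \<Rightarrow> 'a \<Rightarrow> nat" and p :: "nat pmf"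
  assumes Xm[measurable]: "\<And>i. X i \<in> measurable M (count_space UNIV)"
    and ind: "indep_vars (\<lambda>_. count_space UNIV) X UNIV"
    and dis: "\<And>i. distr M (count_space UNIV) (X i) = measure_pmf p"
begin

lemma integrable_X: "integrable M (\<lambda>\<omega>. (g :: nat \<Rightarrow> real) (X i \<omega>)) \<longleftrightarrow> integrable (measure_pmf p) g"
  using integrable_distr_eq[of "X i" M "count_space UNIV" g] dis[of i] by simp

lemma integral_X: "expectation (\<lambda>\<omega>. (g :: nat \<Rightarrow> real) (X i \<omega>)) = measure_pmf.expectation p g"
  using integral_distr[of "X i" M "count_space UNIV" g] dis[of i] by simp

lemma indep_pair:
  fixes g :: "nat \<Rightarrow> real"
  assumes "i \<noteq> j"
  shows "indep_var borel (\<lambda>\<omega>. g (X i \<omega>)) borel (\<lambda>\<omega>. g (X j \<omega>))"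
proof -
  have ind': "indep_vars (\<lambda>_. borel) (\<lambda>i \<omega>. g (X i \<omega>)) UNIV"
    by (rule indep_vars_compose2[OF ind]) auto
  have "indep_var
    borel ((\<lambda>f. f i) \<circ> (\<lambda>\<omega>. restrict (\<lambda>i. g (X i \<omega>)) {i}))
    borel ((\<lambda>f. f j) \<circ> (\<lambda>\<omega>. restrict (\<lambda>i. g (X i \<omega>)) {j}))"
    using assms by (intro indep_var_compose[OF indep_var_restrict[OF ind']]) auto
  also have "((\<lambda>f. f i) \<circ> (\<lambda>\<omega>. restrict (\<lambda>i. g (X i \<omega>)) {i})) = (\<lambda>\<omega>. g (X i \<omega>))"
    by auto
  also have "((\<lambda>f. f j) \<circ> (\<lambda>\<omega>. restrict (\<lambda>i. g (X i \<omega>)) {j})) = (\<lambda>\<omega>. g (X j \<omega>))"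
    by auto
  finally show ?thesis .
qed

lemma second_moment_sum:
  fixes g :: "nat \<Rightarrow> real"
  assumes sq: "integrable (measure_pmf p) (\<lambda>k. (g k)^2)"
  defines "c \<equiv> measure_pmf.expectation p g"
    and "V \<equiv> measure_pmf.expectation p (\<lambda>k. (g k - measure_pmf.expectation p g)^2)"
  shows "expectation (\<lambda>\<omega>. (\<Sum>i<n. g (X i \<omega>) - c)^2) = n * V"
    and "integrable M (\<lambda>\<omega>. (\<Sum>i<n. g (X i \<omega>) - c)^2)"
proof -
  define h where "h k = g k - c" for k
  have intg: "integrable (measure_pmf p) g"
    by (rule measure_pmf.square_integrable_imp_integrable[OF _ sq]) simp
  have inth: "integrable (measure_pmf p) h" unfolding h_def using intg by auto
  have inth2: "integrable (measure_pmf p) (\<lambda>k. h k * h k)"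
    unfolding h_def using sq intg unfolding power2_eq_square ring_distribs
    by (intro Bochner_Integration.integrable_diff) auto
  have Eh: "measure_pmf.expectation p h = 0"
    unfolding h_def c_def using intg by simp
  have Eh2: "measure_pmf.expectation p (\<lambda>k. h k * h k) = V"
    unfolding V_def h_def c_def by (simp add: power2_eq_square)
  have int_ij: "integrable M (\<lambda>\<omega>. h (X i \<omega>) * h (X j \<omega>))"
    and E_ij: "expectation (\<lambda>\<omega>. h (X i \<omega>) * h (X j \<omega>)) = (if i = j then V else 0)" for i j
  proof -
    have "integrable M (\<lambda>\<omega>. h (X i \<omega>) * h (X j \<omega>)) \<and>
          expectation (\<lambda>\<omega>. h (X i \<omega>) * h (X j \<omega>)) = (if i = j then V else 0)"
    proof (cases "i = j")
      case True
      then show ?thesis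
        using integrable_X[of "\<lambda>k. h k * h k" i] integral_X[of "\<lambda>k. h k * h k" i] inth2 Eh2 by simp
    next
      case False
      have ii: "integrable M (\<lambda>\<omega>. h (X i \<omega>))" "integrable M (\<lambda>\<omega>. h (X j \<omega>))"
        using integrable_X inth by auto
      show ?thesis
        using indep_var_lebesgue_integral[OF indep_pair[OF False] ii]
              indep_var_integrable[OF indep_pair[OF False] ii] False integral_X[of h] Eh
        by simp
    qed
    then show "integrable M (\<lambda>\<omega>. h (X i \<omega>) * h (X j \<omega>))"
      and "expectation (\<lambda>\<omega>. h (X i \<omega>) * h (X j \<omega>)) = (if i = j then V else 0)" by auto
  qed
  have eq: "(\<lambda>\<omega>. (\<Sum>i<n. g (X i \<omega>) - c)^2) = (\<lambda>\<omega>. \<Sum>i<n. \<Sum>j<n. h (X i \<omega>) * h (X j \<omega>))"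
    unfolding h_def power2_eq_square sum_product by simp
  show "integrable M (\<lambda>\<omega>. (\<Sum>i<n. g (X i \<omega>) - c)^2)"
    unfolding eq using int_ij by auto
  have "expectation (\<lambda>\<omega>. (\<Sum>i<n. g (X i \<omega>) - c)^2) = (\<Sum>i<n. \<Sum>j<n. (if i = j then V else 0))"
    unfolding eq using int_ij E_ij
    by (simp add: Bochner_Integration.integral_sum)
  also have "\<dots> = n * V" by simp
  finally show "expectation (\<lambda>\<omega>. (\<Sum>i<n. g (X i \<omega>) - c)^2) = n * V" .
qed

lemma cheb_sum:
  fixes g :: "nat \<Rightarrow> real"
  assumes sq: "integrable (measure_pmf p) (\<lambda>k. (g k)^2)" and a: "a > 0"
  defines "c \<equiv> measure_pmf.expectation p g"
    and "V \<equiv> measure_pmf.expectation p (\<lambda>k. (g k - measure_pmf.expectation p g)^2)"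
  shows "prob {\<omega>\<in>space M. a \<le> \<bar>\<Sum>i<n. g (X i \<omega>) - c\<bar>} \<le> n * V / a\<^sup>2"
proof -
  have "prob {\<omega>\<in>space M. \<bar>\<Sum>i<n. g (X i \<omega>) - c\<bar> \<ge> a} \<le> expectation (\<lambda>\<omega>. (\<Sum>i<n. g (X i \<omega>) - c)^2) / a\<^sup>2"
    by (rule second_moment_method) (use second_moment_sum(2)[OF sq] a in \<open>auto simp: c_def\<close>)
  also have "\<dots> = n * V / a\<^sup>2" using second_moment_sum(1)[OF sq] by (simp add: c_def V_def)
  finally show ?thesis .
qed

end


lemma exp_quad_bound:
  fixes x :: real assumes "\<bar>x\<bar> \<le> 1"
  shows "0 \<le> exp (- x) - 1 + x" "exp (- x) - 1 + x \<le> x\<^sup>2"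
proof -
  show "0 \<le> exp (- x) - 1 + x" using exp_ge_add_one_self[of "-x"] by simp
  show "exp (- x) - 1 + x \<le> x\<^sup>2"
  proof (cases "x \<le> 0")
    case True
    then show ?thesis using exp_bound[of "-x"] assms by simp
  next
    case False
    have e: "1 + x \<le> exp x" by simp
    have "exp (- x) = 1 / exp x" by (simp add: exp_minus field_simps)
    also have "\<dots> \<le> 1 / (1 + x)" using False e by (intro divide_left_mono) auto
    also have "\<dots> \<le> 1 - x + x\<^sup>2"
    proof -
      have eq: "(1 - x + x\<^sup>2) * (1 + x) = 1 + x^3"
        by (simp add: algebra_simps power2_eq_square power3_eq_cube)
      have "0 \<le> x^3" using False by simp
      then show ?thesis using False by (subst pos_divide_le_eq) (auto simp: eq)
    qed
    finally show ?thesis by (simp add: algebra_simps)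
  qed
qed

lemma exp_neg_lipschitz:
  fixes a b :: real assumes "0 \<le> a" "0 \<le> b"
  shows "\<bar>exp (- a) - exp (- b)\<bar> \<le> \<bar>a - b\<bar>"
proof -
  have *: "exp (- a) - exp (- b) \<le> b - a" if "0 \<le> a" "a \<le> b" for a b :: real
  proof -
    have "exp (- a) - exp (- b) = exp (- a) * (1 - exp (- (b - a)))"
      by (simp add: algebra_simps flip: exp_add)
    also have "\<dots> \<le> 1 * (b - a)"
    proof (rule mult_mono)
      show "1 - exp (- (b - a)) \<le> b - a" using exp_ge_add_one_self[of "- (b - a)"] by linarith
      show "0 \<le> 1 - exp (- (b - a))" using that by simp
    qed (use that in auto)
    finally show ?thesis by simp
  qed
  show ?thesis
  proof (cases "a \<le> b")
    case True
    with *[of a b] assms show ?thesis by auto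
  next
    case False
    with *[of b a] assms show ?thesis by auto
  qed
qed

lemma sig2_0: "sig2 0 m = exp (- 2 * m) * (exp m - 1 - m)"
  unfolding sig2_def by simp

lemma fk_0: "fk 0 m = exp (- m)"
  unfolding fk_def by simp

lemma sig2_0_pos: "m > 0 \<Longrightarrow> sig2 0 m > 0"
proof -
  assume "m > 0"
  have "1 + m < exp m"
  proof -
    have "1 + m / 2 \<le> exp (m / 2)" by (rule exp_ge_add_one_self)
    then have "(1 + m/2)^2 \<le> exp (m/2) ^ 2" using \<open>m > 0\<close> by (intro power_mono) auto
    also have "exp (m/2) ^ 2 = exp m" by (simp flip: exp_of_nat_mult)
    moreover have "(1 + m/2)^2 = 1 + m + m^2/4" by (simp add: power2_eq_square algebra_simps)
    moreover have "m^2/4 > 0" using \<open>m > 0\<close> by simp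
    ultimately show ?thesis by linarith
  qed
  then show ?thesis unfolding sig2_0 by simp
qed

lemma sig2_0_le1: "m \<ge> 0 \<Longrightarrow> sig2 0 m \<le> 1"
proof -
  assume "m \<ge> 0"
  have "sig2 0 m \<le> exp (- 2 * m) * exp m" unfolding sig2_0 using \<open>m \<ge> 0\<close>
    by (intro mult_left_mono) auto
  also have "\<dots> = exp (- m)" by (simp flip: exp_add)
  also have "\<dots> \<le> 1" using \<open>m \<ge> 0\<close> by simp
  finally show ?thesis .
qed

lemma kstar_0:
  assumes "0 \<le> m" "exp (2 * m) \<le> sqrt (real n)"
  shows "kstar n m = 0"
  unfolding kstar_def
proof (rule Least_eq_0)
  have sn: "sqrt (real n) > 0" using assms(2) by (metis exp_gt_zero less_le_trans)
  have "(if m \<ge> 1 then 1 else 0) * sqrt (sig2 0 m) / ((fk 0 m)\<^sup>2 * sqrt (real n)) \<le> 1 / ((fk 0 m)\<^sup>2 * sqrt (real n))"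
    using sig2_0_le1[OF assms(1)] sn by (intro divide_right_mono) (auto simp: fk_0)
  also have "(fk 0 m)\<^sup>2 = exp (- 2 * m)" by (simp add: fk_0 power2_eq_square flip: exp_add)
  also have "1 / (exp (- 2 * m) * sqrt (real n)) = exp (2 * m) / sqrt (real n)"
    by (simp add: exp_minus field_simps)
  also have "\<dots> \<le> 1" using assms sn by simp
  also have "(1::real) \<le> exp 1" by simp
  finally have "(if m \<ge> 1 then 1 else 0) * sqrt (sig2 0 m) / (exp (- 2 * m) * sqrt (real n)) \<le> exp 1" .
  moreover have "(fk 0 m)\<^sup>2 = exp (- 2 * m)" by (simp add: fk_0 power2_eq_square flip: exp_add)
  ultimately show "(if m \<ge> 1 then 1 else 0) * sqrt (sig2 0 m) / ((fk 0 m)\<^sup>2 * sqrt (real n)) \<le> exp 1" by simp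
qed



lemma isCont_cdf_std_normal: "isCont (cdf std_normal_distribution) x"
proof -
  interpret real_distribution std_normal_distribution by (rule real_dist_normal_dist)
  have ae: "AE y in lborel. y \<in> {x} \<longrightarrow> std_normal_density y = 0"
    using AE_lborel_singleton[of x] by eventually_elim auto
  have "{x} \<in> null_sets std_normal_distribution"
    by (subst null_sets_density_iff) (use ae in auto)
  then have "measure std_normal_distribution {x} = 0" by (simp add: measure_def null_setsD1)
  then show ?thesis by (simp add: isCont_cdf)
qed

lemma (in prob_space) prob_le_union2:
  assumes "A \<subseteq> B \<union> C" "B \<in> events" "C \<in> events"
  shows "prob A \<le> prob B + prob C"
  using finite_measure_mono[OF assms(1)] measure_Un_le[of B M C] assms by auto

lemma (in prob_space) cdf_distr:
  assumes [measurable]: "f \<in> borel_measurable M"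
  shows "cdf (distr M borel f) x = prob {\<omega>\<in>space M. f \<omega> \<le> x}"
  unfolding cdf_def by (subst measure_distr) (auto intro!: arg_cong[where f=prob])

lemma (in prob_space) slutsky:
  fixes Z W :: "nat \<Rightarrow> 'a \<Rightarrow> real"
  assumes Zm[measurable]: "\<And>n. Z n \<in> borel_measurable M" and Wm[measurable]: "\<And>n. W n \<in> borel_measurable M"
    and conv: "weak_conv_m (\<lambda>n. distr M borel (Z n)) N"
    and cont: "\<And>x. isCont (cdf N) x"
    and close: "\<And>e. e > 0 \<Longrightarrow> (\<lambda>n. prob {\<omega>\<in>space M. e \<le> \<bar>W n \<omega> - Z n \<omega>\<bar>}) \<longlonglongrightarrow> 0"
  shows "weak_conv_m (\<lambda>n. distr M borel (W n)) N"
  unfolding weak_conv_m_def weak_conv_def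
proof (intro allI impI)
  fix x assume "isCont (cdf N) x"
  have FZ: "(\<lambda>n. prob {\<omega>\<in>space M. Z n \<omega> \<le> y}) \<longlonglongrightarrow> cdf N y" for y
    using conv cont[of y] unfolding weak_conv_m_def weak_conv_def by (simp add: cdf_distr)
  show "(\<lambda>n. cdf (distr M borel (W n)) x) \<longlonglongrightarrow> cdf N x"
    unfolding cdf_distr[OF Wm]
  proof (rule LIMSEQ_I)
    fix r :: real assume "r > 0"
    from cont[of x] have lim: "cdf N \<midarrow>x\<rightarrow> cdf N x" by (simp add: isCont_def)
    have "0 < r/4" using \<open>r > 0\<close> by simp
    from LIM_D[OF lim this] obtain s where s: "s > 0"
      "\<And>y. y \<noteq> x \<and> norm (y - x) < s \<longrightarrow> norm (cdf N y - cdf N x) < r/4" by auto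
    define e where "e = s / 2"
    have e: "e > 0" "\<bar>cdf N (x + e) - cdf N x\<bar> < r/4" "\<bar>cdf N (x - e) - cdf N x\<bar> < r/4"
      using s(2)[of "x + e"] s(2)[of "x - e"] s(1) by (auto simp: e_def)
    have ev: "eventually (\<lambda>n. \<bar>prob {\<omega>\<in>space M. Z n \<omega> \<le> x + e} - cdf N (x + e)\<bar> < r/4 \<and>
        \<bar>prob {\<omega>\<in>space M. Z n \<omega> \<le> x - e} - cdf N (x - e)\<bar> < r/4 \<and>
        prob {\<omega>\<in>space M. e \<le> \<bar>W n \<omega> - Z n \<omega>\<bar>} < r/4) sequentially"
      using tendstoD[OF FZ[of "x + e"], of "r/4"] tendstoD[OF FZ[of "x - e"], of "r/4"]
        tendstoD[OF close[OF e(1)], of "r/4"] \<open>r > 0\<close>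
      by (simp add: dist_real_def eventually_conj_iff)
    then obtain no where no: "\<And>n. n \<ge> no \<Longrightarrow> \<bar>prob {\<omega>\<in>space M. Z n \<omega> \<le> x + e} - cdf N (x + e)\<bar> < r/4 \<and>
        \<bar>prob {\<omega>\<in>space M. Z n \<omega> \<le> x - e} - cdf N (x - e)\<bar> < r/4 \<and>
        prob {\<omega>\<in>space M. e \<le> \<bar>W n \<omega> - Z n \<omega>\<bar>} < r/4"
      unfolding eventually_sequentially by blast
    show "\<exists>no. \<forall>n\<ge>no. norm (prob {\<omega>\<in>space M. W n \<omega> \<le> x} - cdf N x) < r"
    proof (intro exI allI impI)
      fix n assume "n \<ge> no"
      note h = no[OF this]
      have up: "prob {\<omega>\<in>space M. W n \<omega> \<le> x} \<le> prob {\<omega>\<in>space M. Z n \<omega> \<le> x + e} + prob {\<omega>\<in>space M. e \<le> \<bar>W n \<omega> - Z n \<omega>\<bar>}"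
        by (rule prob_le_union2) auto
      have lo: "prob {\<omega>\<in>space M. Z n \<omega> \<le> x - e} \<le> prob {\<omega>\<in>space M. W n \<omega> \<le> x} + prob {\<omega>\<in>space M. e \<le> \<bar>W n \<omega> - Z n \<omega>\<bar>}"
        by (rule prob_le_union2) auto
      from up lo h e show "norm (prob {\<omega>\<in>space M. W n \<omega> \<le> x} - cdf N x) < r"
        unfolding real_norm_def abs_less_iff by (elim conjE; intro conjI; linarith)
    qed
  qed
qed



lemma tendsto0_bound:
  fixes f b :: "nat \<Rightarrow> real"
  assumes "eventually (\<lambda>n. 0 \<le> f n \<and> f n \<le> b n) sequentially" "b \<longlonglongrightarrow> 0"
  shows "f \<longlonglongrightarrow> 0"
  by (rule tendsto_sandwich[of "\<lambda>_. 0" f sequentially b]) (use assms in \<open>auto elim: eventually_mono\<close>)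

lemma sqrt_n_at_top: "filterlim (\<lambda>n. sqrt (real n)) at_top sequentially"
  by (rule filterlim_compose[OF sqrt_at_top filterlim_real_sequentially])

lemma eventually_sqrt_n_ge: "eventually (\<lambda>n. z \<le> sqrt (real n)) sequentially"
  using sqrt_n_at_top unfolding filterlim_at_top by blast

context iid begin

lemma T_meas: "(\<lambda>\<omega>. map (\<lambda>i. X i \<omega>) [0..<n]) \<in> M \<rightarrow>\<^sub>M count_space UNIV"
proof (induction n)
  case 0 show ?case by simp
next
  case (Suc n)
  have "(\<lambda>\<omega>. (\<lambda>x \<omega>. map (\<lambda>i. X i \<omega>) [0..<n] @ [x]) (X n \<omega>) \<omega>) \<in> M \<rightarrow>\<^sub>M count_space UNIV"
    by (rule measurable_compose_countable[where g="X n"])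
       (auto intro: measurable_compose[OF Suc measurable_count_space])
  then show ?case by simp
qed

lemma W_eq: "W_stat X n \<omega> = W_stat (\<lambda>i l. l ! i) n (map (\<lambda>i. X i \<omega>) [0..<n])"
proof -
  have s1: "(\<Sum>x<n. real (map (\<lambda>i. X i \<omega>) [0..<n] ! x)) = (\<Sum>i<n. real (X i \<omega>))"
    by (rule sum.cong) auto
  have s2: "(\<Sum>x<n. if map (\<lambda>i. X i \<omega>) [0..<n] ! x \<le> k then 1 else 0) = (\<Sum>i<n. if X i \<omega> \<le> k then 1 else (0::real))" for k
    by (rule sum.cong) auto
  show ?thesis unfolding W_stat_def sample_mean_def emp_cdf_def s1 s2 ..
qed

lemma W_meas[measurable]: "W_stat X n \<in> borel_measurable M"
proof -
  have "(\<lambda>\<omega>. W_stat (\<lambda>i l. l ! i) n (map (\<lambda>i. X i \<omega>) [0..<n])) \<in> borel_measurable M"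
    by (rule measurable_compose[OF T_meas]) simp
  then show ?thesis by (simp add: W_eq[abs_def])
qed

lemma realX_meas[measurable]: "(\<lambda>\<omega>. (g :: nat \<Rightarrow> real) (X i \<omega>)) \<in> borel_measurable M"
  by (rule measurable_compose[OF Xm]) simp

lemma sm_meas[measurable]: "sample_mean X n \<in> borel_measurable M"
  unfolding sample_mean_def[abs_def] by measurable

lemma emp_meas[measurable]: "emp_cdf X n k \<in> borel_measurable M"
  unfolding emp_cdf_def[abs_def] by measurable

lemma cheb_sum':
  fixes g :: "nat \<Rightarrow> real"
  assumes sq: "integrable (measure_pmf p) (\<lambda>k. (g k)^2)" and a: "a > 0"
  shows "prob {\<omega>\<in>space M. a \<le> \<bar>(\<Sum>i<n. g (X i \<omega>)) - n * measure_pmf.expectation p g\<bar>}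
     \<le> n * measure_pmf.expectation p (\<lambda>k. (g k - measure_pmf.expectation p g)^2) / a\<^sup>2"
  using cheb_sum[OF sq a, of n] by (simp add: sum_subtractf)

lemma lln:
  fixes g :: "nat \<Rightarrow> real"
  assumes sq: "integrable (measure_pmf p) (\<lambda>k. (g k)^2)" and d: "d > 0"
  shows "(\<lambda>n. prob {\<omega>\<in>space M. d \<le> \<bar>(\<Sum>i<n. g (X i \<omega>)) / n - measure_pmf.expectation p g\<bar>}) \<longlonglongrightarrow> 0"
proof (rule tendsto0_bound)
  define c where "c = measure_pmf.expectation p g"
  define V where "V = measure_pmf.expectation p (\<lambda>k. (g k - c)^2)"
  show "(\<lambda>n. V / d\<^sup>2 / real n) \<longlonglongrightarrow> 0" by (rule lim_const_over_n)
  show "\<forall>\<^sub>F n in sequentially. 0 \<le> prob {\<omega>\<in>space M. d \<le> \<bar>(\<Sum>i<n. g (X i \<omega>)) / n - measure_pmf.expectation p g\<bar>} \<and>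
      prob {\<omega>\<in>space M. d \<le> \<bar>(\<Sum>i<n. g (X i \<omega>)) / n - measure_pmf.expectation p g\<bar>} \<le> V / d\<^sup>2 / real n"
    using eventually_gt_at_top[of 0]
  proof eventually_elim
    case (elim n)
    have "{\<omega>\<in>space M. d \<le> \<bar>(\<Sum>i<n. g (X i \<omega>)) / n - c\<bar>} = {\<omega>\<in>space M. n * d \<le> \<bar>(\<Sum>i<n. g (X i \<omega>)) - n * c\<bar>}"
    proof -
      have "d \<le> \<bar>S / n - c\<bar> \<longleftrightarrow> n * d \<le> \<bar>S - n * c\<bar>" for S
      proof -
        have "S / n - c = (S - n * c) / n" using elim by (simp add: field_simps)
        then have "\<bar>S / n - c\<bar> = \<bar>S - n * c\<bar> / n" by simp
        then show ?thesis using elim by (simp add: le_divide_eq mult.commute)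
      qed
      then show ?thesis by auto
    qed
    moreover have "prob {\<omega>\<in>space M. n * d \<le> \<bar>(\<Sum>i<n. g (X i \<omega>)) - n * c\<bar>} \<le> n * V / (n * d)\<^sup>2"
      using cheb_sum'[OF sq, of "n * d" n] elim d by (simp add: c_def V_def)
    moreover have "n * V / (n * d)\<^sup>2 = V / d\<^sup>2 / real n" using elim by (simp add: field_simps power2_eq_square)
    ultimately show ?case by (simp add: c_def)
  qed
qed

end



lemma tri_aux: fixes a b F p :: real
  shows "\<bar>a - b\<bar> < \<bar>b - p\<bar>/4 \<Longrightarrow> \<bar>F - p\<bar> < \<bar>b - p\<bar>/4 \<Longrightarrow> \<bar>b - p\<bar>/2 \<le> \<bar>a - F\<bar>"
  by (auto simp: abs_if split: if_splits)

lemma min_aux: fixes m u x :: real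
  shows "\<bar>m - u\<bar> < min (u/2) (min 1 x) \<Longrightarrow> 0 < u \<Longrightarrow> 0 < m \<and> m \<le> u + 1"
  by (auto simp: abs_if split: if_splits)

context iid begin

lemma E_ind0: "measure_pmf.expectation p (\<lambda>k. if k \<le> 0 then 1 else (0::real)) = pmf p 0"
  by (subst integral_measure_pmf_real[of "{0}"]) (auto split: if_splits)

lemma sq_ind0: "integrable (measure_pmf p) (\<lambda>k. (if k \<le> 0 then 1 else (0::real))\<^sup>2)"
  by (rule measure_pmf.integrable_const_bound[where B=1]) auto

lemma W_formula:
  assumes "0 \<le> sample_mean X n \<omega>" "exp (2 * sample_mean X n \<omega>) \<le> sqrt (real n)"
  shows "W_stat X n \<omega> = sqrt (real n) * (exp (- sample_mean X n \<omega>) - emp_cdf X n 0 \<omega>) / sqrt (sig2 0 (sample_mean X n \<omega>))"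
  unfolding W_stat_def Let_def kstar_0[OF assms] fk_0 ..

lemma partB:
  assumes sq: "integrable (measure_pmf p) (\<lambda>k. (real k)\<^sup>2)"
    and mpos: "measure_pmf.expectation p real > 0"
    and ne: "pmf p 0 \<noteq> exp (- measure_pmf.expectation p real)"
  shows "abs_tends_to_infinity_in_prob M (W_stat X)"
  unfolding abs_tends_to_infinity_in_prob_def
proof
  fix C :: real
  define \<mu> where "\<mu> = measure_pmf.expectation p real"
  define p0 where "p0 = pmf p 0"
  define c where "c = exp (- \<mu>) - p0"
  have c: "\<bar>c\<bar> > 0" using ne by (simp add: c_def p0_def \<mu>_def)
  have mu: "\<mu> > 0" using mpos by (simp add: \<mu>_def)
  define d1 where "d1 = min (\<mu>/2) (min 1 (\<bar>c\<bar>/4))"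
  define d2 where "d2 = \<bar>c\<bar>/4"
  have d1: "d1 > 0" using c mu by (simp add: d1_def)
  have d2: "d2 > 0" using c by (simp add: d2_def)
  define P1 where "P1 n = prob {\<omega>\<in>space M. d1 \<le> \<bar>sample_mean X n \<omega> - \<mu>\<bar>}" for n
  define P2 where "P2 n = prob {\<omega>\<in>space M. d2 \<le> \<bar>emp_cdf X n 0 \<omega> - p0\<bar>}" for n
  have P1: "P1 \<longlonglongrightarrow> 0"
    using lln[OF sq d1] unfolding P1_def[abs_def] \<mu>_def sample_mean_def by simp
  have P2: "P2 \<longlonglongrightarrow> 0"
    using lln[OF sq_ind0 d2] unfolding P2_def[abs_def] p0_def emp_cdf_def E_ind0 by simp
  show "(\<lambda>n. prob {\<omega> \<in> space M. \<bar>W_stat X n \<omega>\<bar> \<le> C}) \<longlonglongrightarrow> 0"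
  proof (rule tendsto0_bound)
    show "(\<lambda>n. P1 n + P2 n) \<longlonglongrightarrow> 0" using tendsto_add[OF P1 P2] by simp
    show "\<forall>\<^sub>F n in sequentially. 0 \<le> prob {\<omega> \<in> space M. \<bar>W_stat X n \<omega>\<bar> \<le> C} \<and>
        prob {\<omega> \<in> space M. \<bar>W_stat X n \<omega>\<bar> \<le> C} \<le> P1 n + P2 n"
      using eventually_sqrt_n_ge[of "exp (2 * (\<mu> + 1))"] eventually_sqrt_n_ge[of "2 * \<bar>C\<bar> / \<bar>c\<bar> + 1"]
    proof eventually_elim
      case (elim n)
      have "{\<omega> \<in> space M. \<bar>W_stat X n \<omega>\<bar> \<le> C} \<subseteq>
        {\<omega>\<in>space M. d1 \<le> \<bar>sample_mean X n \<omega> - \<mu>\<bar>} \<union> {\<omega>\<in>space M. d2 \<le> \<bar>emp_cdf X n 0 \<omega> - p0\<bar>}"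
      proof (rule subsetI, rule ccontr)
        fix \<omega> assume om: "\<omega> \<in> {\<omega> \<in> space M. \<bar>W_stat X n \<omega>\<bar> \<le> C}"
          and nb: "\<omega> \<notin> {\<omega>\<in>space M. d1 \<le> \<bar>sample_mean X n \<omega> - \<mu>\<bar>} \<union> {\<omega>\<in>space M. d2 \<le> \<bar>emp_cdf X n 0 \<omega> - p0\<bar>}"
        define m where "m = sample_mean X n \<omega>"
        define F where "F = emp_cdf X n 0 \<omega>"
        have m1: "\<bar>m - \<mu>\<bar> < d1" and F1: "\<bar>F - p0\<bar> < d2" using om nb by (auto simp: m_def F_def)
        have mpos': "m > 0" "m \<le> \<mu> + 1" using min_aux[OF m1[unfolded d1_def] mu] by auto
        have "exp (2 * m) \<le> exp (2 * (\<mu> + 1))" using mpos' by simp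
        then have ex: "exp (2 * m) \<le> sqrt (real n)" using elim by linarith
        have W: "W_stat X n \<omega> = sqrt (real n) * (exp (- m) - F) / sqrt (sig2 0 m)"
          unfolding m_def F_def by (rule W_formula) (use mpos' ex in \<open>auto simp: m_def\<close>)
        have "\<bar>exp (- m) - exp (- \<mu>)\<bar> \<le> \<bar>m - \<mu>\<bar>"
          using mpos' mu by (intro exp_neg_lipschitz) auto
        also have "\<dots> < \<bar>c\<bar>/4" using m1 unfolding d1_def by auto
        finally have "\<bar>exp (- m) - exp (- \<mu>)\<bar> < \<bar>c\<bar>/4" .
        then have big: "\<bar>c\<bar>/2 \<le> \<bar>exp (- m) - F\<bar>" using F1 unfolding d2_def c_def by (rule tri_aux)
        have s0: "0 < sqrt (sig2 0 m)" "sqrt (sig2 0 m) \<le> 1"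
          using sig2_0_pos[OF mpos'(1)] sig2_0_le1[of m] mpos' by auto
        have sn: "0 \<le> sqrt (real n)" by simp
        have "sqrt (real n) * (\<bar>c\<bar>/2) \<le> sqrt (real n) * \<bar>exp (- m) - F\<bar>"
          using big sn by (rule mult_left_mono)
        also have "\<dots> \<le> sqrt (real n) * \<bar>exp (- m) - F\<bar> / sqrt (sig2 0 m)"
          using s0 sn by (simp add: le_divide_eq mult_left_le)
        also have "\<dots> = \<bar>W_stat X n \<omega>\<bar>" unfolding W using s0 by (simp add: abs_mult)
        finally have "sqrt (real n) * (\<bar>c\<bar>/2) \<le> \<bar>W_stat X n \<omega>\<bar>" .
        moreover have "(2 * \<bar>C\<bar> / \<bar>c\<bar> + 1) * (\<bar>c\<bar>/2) \<le> sqrt (real n) * (\<bar>c\<bar>/2)"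
          using elim c by (intro mult_right_mono) auto
        moreover have "(2 * \<bar>C\<bar> / \<bar>c\<bar> + 1) * (\<bar>c\<bar>/2) = \<bar>C\<bar> + \<bar>c\<bar>/2"
          using c by (simp add: field_simps)
        ultimately show False using om c by auto
      qed
      then have "prob {\<omega> \<in> space M. \<bar>W_stat X n \<omega>\<bar> \<le> C} \<le> P1 n + P2 n"
        unfolding P1_def P2_def by (rule prob_le_union2) auto
      then show ?case by simp
    qed
  qed
qed

end


lemma poisson_second_moment:
  fixes p :: "nat pmf" and \<mu> :: real
  assumes pp: "p = poisson_pmf \<mu>" and mu: "measure_pmf.expectation p real = \<mu>" and mpos: "\<mu> > 0"
    and sq: "integrable (measure_pmf p) (\<lambda>k. (real k)\<^sup>2)"
  shows "measure_pmf.expectation p (\<lambda>k. (real k)\<^sup>2) = \<mu>\<^sup>2 + \<mu>"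
proof -
  have int1: "integrable (measure_pmf p) real"
    by (rule measure_pmf.square_integrable_imp_integrable[OF _ sq]) simp
  have s2: "(\<lambda>k. pmf p k * (real k)\<^sup>2) sums measure_pmf.expectation p (\<lambda>k. (real k)\<^sup>2)"
    by (rule pmf_integral_sums[OF sq])
  then have s2': "(\<lambda>k. pmf p (Suc k) * (real (Suc k))\<^sup>2) sums measure_pmf.expectation p (\<lambda>k. (real k)\<^sup>2)"
    by (subst sums_Suc_iff) simp
  have eq: "pmf p (Suc k) * (real (Suc k))\<^sup>2 = \<mu> * (pmf p k * real k + pmf p k)" for k
  proof -
    have "pmf p (Suc k) * (real (Suc k))\<^sup>2 = \<mu> ^ Suc k / fact (Suc k) * exp (- \<mu>) * (real (Suc k))\<^sup>2"
      using mpos by (simp add: pp)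
    also have "\<dots> = \<mu> * (\<mu> ^ k / fact k * exp (- \<mu>)) * real (Suc k)"
    proof -
      have f: "(fact (Suc k)::real) = real (Suc k) * fact k" by (simp only: fact_Suc of_nat_fact)
      have nz: "real (Suc k) \<noteq> 0" "(fact k :: real) \<noteq> 0" by (simp del: of_nat_Suc, simp)
      show ?thesis unfolding f using nz by (simp add: field_simps power2_eq_square del: of_nat_Suc)
    qed
    also have "\<dots> = \<mu> * (\<mu> ^ k / fact k * exp (- \<mu>)) * (real k + 1)" by simp
    also have "\<dots> = \<mu> * (pmf p k * real k + pmf p k)"
      using mpos by (simp add: pp algebra_simps add_divide_distrib)
    finally show ?thesis .
  qed
  have "(\<lambda>k. \<mu> * (pmf p k * real k + pmf p k)) sums (\<mu> * (\<mu> + 1))"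
    using pmf_integral_sums[OF int1] pmf_sums_one[of p] mu
    by (intro sums_mult sums_add) auto
  with s2' have "measure_pmf.expectation p (\<lambda>k. (real k)\<^sup>2) = \<mu> * (\<mu> + 1)"
    unfolding eq by (rule sums_unique2)
  then show ?thesis by (simp add: power2_eq_square algebra_simps)
qed

definition gY :: "real \<Rightarrow> nat \<Rightarrow> real" where
  "gY \<mu> k = - exp (- \<mu>) * real k - (if k \<le> 0 then 1 else 0)"

lemma gY_sq: "(gY \<mu> k)\<^sup>2 = exp (- 2 * \<mu>) * (real k)\<^sup>2 + (if k \<le> 0 then 1 else 0)"
  by (cases k) (auto simp: gY_def power2_eq_square algebra_simps simp flip: exp_add)

lemma gY_moments:
  fixes p :: "nat pmf" and \<mu> :: real
  assumes pp: "p = poisson_pmf \<mu>" and mu: "measure_pmf.expectation p real = \<mu>" and mpos: "\<mu> > 0"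
    and sq: "integrable (measure_pmf p) (\<lambda>k. (real k)\<^sup>2)"
  shows "integrable (measure_pmf p) (\<lambda>k. (gY \<mu> k)\<^sup>2)"
    and "measure_pmf.expectation p (gY \<mu>) = - exp (- \<mu>) * \<mu> - exp (- \<mu>)"
    and "measure_pmf.expectation p (\<lambda>k. (gY \<mu> k - measure_pmf.expectation p (gY \<mu>))\<^sup>2) = sig2 0 \<mu>"
proof -
  have int1: "integrable (measure_pmf p) real"
    by (rule measure_pmf.square_integrable_imp_integrable[OF _ sq]) simp
  have int0: "integrable (measure_pmf p) (\<lambda>k. if k \<le> 0 then 1 else (0::real))"
    by (rule measure_pmf.integrable_const_bound[where B=1]) auto
  have E0: "measure_pmf.expectation p (\<lambda>k. if k \<le> 0 then 1 else (0::real)) = exp (- \<mu>)"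
    using mpos by (subst integral_measure_pmf_real[of "{0}"]) (auto split: if_splits simp: pp)
  have intg: "integrable (measure_pmf p) (gY \<mu>)"
    unfolding gY_def[abs_def] using int1 int0 by auto
  show intg2: "integrable (measure_pmf p) (\<lambda>k. (gY \<mu> k)\<^sup>2)"
    unfolding gY_sq using sq int0 by auto
  show Eg: "measure_pmf.expectation p (gY \<mu>) = - exp (- \<mu>) * \<mu> - exp (- \<mu>)"
    unfolding gY_def[abs_def] using int1 int0 E0 mu by simp
  have Eg2: "measure_pmf.expectation p (\<lambda>k. (gY \<mu> k)\<^sup>2) = exp (- 2 * \<mu>) * (\<mu>\<^sup>2 + \<mu>) + exp (- \<mu>)"
    unfolding gY_sq using sq int0 E0 poisson_second_moment[OF assms] by simp
  have "measure_pmf.expectation p (\<lambda>k. (gY \<mu> k - measure_pmf.expectation p (gY \<mu>))\<^sup>2)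
      = measure_pmf.expectation p (\<lambda>k. (gY \<mu> k)\<^sup>2) - (measure_pmf.expectation p (gY \<mu>))\<^sup>2"
    using measure_pmf.variance_eq[OF intg intg2] by simp
  also have "\<dots> = exp (- 2 * \<mu>) * (\<mu>\<^sup>2 + \<mu>) + exp (- \<mu>) - (exp (- \<mu>) * (\<mu> + 1))\<^sup>2"
    unfolding Eg2 Eg by (simp add: power2_eq_square algebra_simps)
  also have "\<dots> = sig2 0 \<mu>"
    unfolding sig2_0 by (simp add: power2_eq_square algebra_simps flip: exp_add)
  finally show "measure_pmf.expectation p (\<lambda>k. (gY \<mu> k - measure_pmf.expectation p (gY \<mu>))\<^sup>2) = sig2 0 \<mu>" .
qed



lemma tends0_eps:
  fixes f :: "nat \<Rightarrow> real"
  assumes "\<And>g. g > 0 \<Longrightarrow> eventually (\<lambda>n. f n \<le> g) sequentially" "\<And>n. 0 \<le> f n"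
  shows "f \<longlonglongrightarrow> 0"
proof (rule LIMSEQ_I)
  fix r :: real assume "r > 0"
  then have "eventually (\<lambda>n. f n \<le> r/2) sequentially" using assms(1)[of "r/2"] by simp
  then obtain N where "\<And>n. n \<ge> N \<Longrightarrow> f n \<le> r/2" unfolding eventually_sequentially by blast
  then show "\<exists>no. \<forall>n\<ge>no. norm (f n - 0) < r"
  proof (intro exI[of _ N] allI impI)
    fix n assume "n \<ge> N"
    then have "f n \<le> r/2" "0 \<le> f n" using \<open>\<And>n. n \<ge> N \<Longrightarrow> f n \<le> r/2\<close> assms(2) by auto
    then show "norm (f n - 0) < r" using \<open>r > 0\<close> by simp
  qed
qed

lemma close_aux:
  fixes t K a b e R x sn :: real
  assumes "\<bar>t\<bar> < K" "\<bar>1/a - 1/b\<bar> < e/(2*K)" "0 < a" "1/a \<le> 2/b" "b > 0"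
   "\<bar>R\<bar> \<le> x" "sn * x < e*b/4" "sn \<ge> 0"
  shows "\<bar>(t + sn * R)/a - t/b\<bar> < e"
proof -
  have K: "K > 0" using assms(1) by linarith
  have eq: "(t + sn * R)/a - t/b = t * (1/a - 1/b) + sn * R * (1/a)" by (simp add: field_simps add_divide_distrib)
  have "\<bar>t * (1/a - 1/b)\<bar> \<le> K * (e/(2*K))"
    unfolding abs_mult using assms(1,2) by (intro mult_mono) auto
  also have "\<dots> = e/2" using K by simp
  finally have 1: "\<bar>t * (1/a - 1/b)\<bar> \<le> e/2" .
  have "\<bar>sn * R * (1/a)\<bar> = sn * \<bar>R\<bar> * (1/a)" using assms by (simp add: abs_mult)
  also have "\<dots> \<le> sn * x * (2/b)"
  proof (rule mult_mono)
    show "sn * \<bar>R\<bar> \<le> sn * x" using assms(6,8) by (rule mult_left_mono)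
    show "0 \<le> sn * x" using assms(6,8) by (metis abs_ge_zero order_trans mult_nonneg_nonneg)
  qed (use assms in auto)
  also have "\<dots> < (e*b/4) * (2/b)" using assms by (intro mult_strict_right_mono) auto
  also have "\<dots> = e/2" using assms by simp
  finally have 2: "\<bar>sn * R * (1/a)\<bar> < e/2" .
  have tri: "\<bar>A + B\<bar> < e" if "\<bar>A\<bar> \<le> e/2" "\<bar>B\<bar> < e/2" for A B :: real
    using that abs_triangle_ineq[of A B] by linarith
  show ?thesis unfolding eq by (rule tri[OF 1 2])
qed

context iid begin

lemma clt_part:
  assumes sq: "integrable (measure_pmf p) (\<lambda>k. (real k)\<^sup>2)"
    and mu: "measure_pmf.expectation p real = \<mu>" and mpos: "\<mu> > 0" and pp: "p = poisson_pmf \<mu>"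
  shows "weak_conv_m (\<lambda>n. distr M borel (\<lambda>\<omega>. (\<Sum>i<n. gY \<mu> (X i \<omega>) - measure_pmf.expectation p (gY \<mu>)) / sqrt (real n * (sqrt (sig2 0 \<mu>))\<^sup>2))) std_normal_distribution"
proof -
  note gm = gY_moments[OF pp mu mpos sq]
  have s: "sig2 0 \<mu> > 0" using sig2_0_pos[OF mpos] .
  show ?thesis
  proof (rule central_limit_theorem[where X="\<lambda>i \<omega>. gY \<mu> (X i \<omega>)" and m="measure_pmf.expectation p (gY \<mu>)"
        and \<sigma>="sqrt (sig2 0 \<mu>)" and \<mu>="distr (measure_pmf p) borel (gY \<mu>)"])
    show "indep_vars (\<lambda>i. borel) (\<lambda>i \<omega>. gY \<mu> (X i \<omega>)) UNIV"
      by (rule indep_vars_compose2[OF ind]) auto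
    show "expectation (\<lambda>\<omega>. gY \<mu> (X n \<omega>)) = measure_pmf.expectation p (gY \<mu>)" for n
      by (rule integral_X)
    show "0 < sqrt (sig2 0 \<mu>)" using s by simp
    show "integrable M (\<lambda>\<omega>. (gY \<mu> (X n \<omega>))\<^sup>2)" for n
      using integrable_X[of "\<lambda>k. (gY \<mu> k)\<^sup>2"] gm(1) by simp
    show "variance (\<lambda>\<omega>. gY \<mu> (X n \<omega>)) = (sqrt (sig2 0 \<mu>))\<^sup>2" for n
      using integral_X[of "\<lambda>k. (gY \<mu> k - measure_pmf.expectation p (gY \<mu>))\<^sup>2" n] gm(3) s
      by (simp add: integral_X)
    show "distr M borel (\<lambda>\<omega>. gY \<mu> (X n \<omega>)) = distr (measure_pmf p) borel (gY \<mu>)" for n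
      using distr_distr[of "gY \<mu>" "count_space UNIV" borel "X n" M] dis[of n] by (simp add: comp_def)
  qed
qed

end


lemma abs_lt_sqrt_sq: fixes y z :: real assumes "\<bar>y\<bar> < sqrt z" shows "y\<^sup>2 < z"
proof -
  have z: "0 \<le> z"
  proof (rule ccontr)
    assume "\<not> 0 \<le> z"
    then have "sqrt z < 0" by simp
    moreover have "0 \<le> \<bar>y\<bar>" by simp
    ultimately show False using assms by linarith
  qed
  have "\<bar>y\<bar>^2 < (sqrt z)^2" using assms by (intro power_strict_mono) auto
  then show ?thesis using z by simp
qed

lemma isCont_sig_aux: "sqrt (exp (- 2 * (u::real)) * (exp u - 1 - u)) \<noteq> 0 \<Longrightarrow> isCont (\<lambda>m. 1 / sqrt (exp (- 2 * m) * (exp m - 1 - m))) u"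
  by (intro continuous_intros) auto

context iid begin

lemma close_part:
  assumes sq: "integrable (measure_pmf p) (\<lambda>k. (real k)\<^sup>2)"
    and mu: "measure_pmf.expectation p real = \<mu>" and mpos: "\<mu> > 0" and pp: "p = poisson_pmf \<mu>"
    and e: "e > 0"
  shows "(\<lambda>n. prob {\<omega>\<in>space M. e \<le> \<bar>W_stat X n \<omega> - (\<Sum>i<n. gY \<mu> (X i \<omega>) - measure_pmf.expectation p (gY \<mu>)) / sqrt (real n * (sqrt (sig2 0 \<mu>))\<^sup>2)\<bar>}) \<longlonglongrightarrow> 0"
proof -
  define f where "f n = prob {\<omega>\<in>space M. e \<le> \<bar>W_stat X n \<omega> - (\<Sum>i<n. gY \<mu> (X i \<omega>) - measure_pmf.expectation p (gY \<mu>)) / sqrt (real n * (sqrt (sig2 0 \<mu>))\<^sup>2)\<bar>}" for n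
  have "f \<longlonglongrightarrow> 0"
  proof (rule tends0_eps)
  show "0 \<le> f n" for n unfolding f_def by (rule measure_nonneg)
  fix \<gamma> :: real assume \<gamma>: "\<gamma> > 0"
  note gm = gY_moments[OF pp mu mpos sq]
  define cY where "cY = measure_pmf.expectation p (gY \<mu>)"
  define s where "s = sig2 0 \<mu>"
  define b where "b = sqrt s"
  have s: "s > 0" unfolding s_def using sig2_0_pos[OF mpos] .
  have b: "b > 0" unfolding b_def using s by simp
  define K where "K = sqrt (2 * s / \<gamma>) + 1"
  have K: "K > 0"
  proof -
    have "0 \<le> sqrt (2 * s / \<gamma>)" using s \<gamma> by simp
    then show ?thesis unfolding K_def by linarith
  qed
  have K2: "s / K\<^sup>2 \<le> \<gamma> / 2"
  proof -
    have "sqrt (2 * s / \<gamma>) \<le> K" unfolding K_def by simp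
    then have "(sqrt (2 * s / \<gamma>))\<^sup>2 \<le> K\<^sup>2" using s \<gamma> by (intro power_mono) auto
    then have k2: "2 * s / \<gamma> \<le> K\<^sup>2" using s \<gamma> by simp
    have "s / K\<^sup>2 \<le> s / (2 * s / \<gamma>)" using s \<gamma> k2 K by (intro divide_left_mono) auto
    also have "\<dots> = \<gamma> / 2" using s by simp
    finally show ?thesis .
  qed
  define \<phi> where "\<phi> m = 1 / sqrt (sig2 0 m)" for m
  have cont: "isCont \<phi> \<mu>"
  proof -
    have pos: "0 < exp (- 2 * \<mu>) * (exp \<mu> - 1 - \<mu>)" using s unfolding s_def sig2_0 .
    have "sqrt (exp (- 2 * \<mu>) * (exp \<mu> - 1 - \<mu>)) \<noteq> 0"
      using real_sqrt_gt_zero[OF pos] by (rule less_imp_neq[THEN not_sym])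
    then have "isCont (\<lambda>m. 1 / sqrt (exp (- 2 * m) * (exp m - 1 - m))) \<mu>"
      by (rule isCont_sig_aux)
    then show ?thesis unfolding \<phi>_def sig2_0 .
  qed
  have phimu: "\<phi> \<mu> = 1 / b" unfolding \<phi>_def b_def s_def ..
  define \<epsilon> where "\<epsilon> = min (e / (2 * K)) (1 / b)"
  have \<epsilon>: "\<epsilon> > 0" unfolding \<epsilon>_def using e K b by simp
  from cont have lim: "\<phi> \<midarrow>\<mu>\<rightarrow> \<phi> \<mu>" by (simp add: isCont_def)
  from LIM_D[OF lim \<epsilon>] obtain \<delta>0 where \<delta>0: "\<delta>0 > 0"
    "\<And>m. m \<noteq> \<mu> \<and> norm (m - \<mu>) < \<delta>0 \<longrightarrow> norm (\<phi> m - \<phi> \<mu>) < \<epsilon>" by auto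
  have phi_close: "\<bar>\<phi> m - 1 / b\<bar> < \<epsilon>" if "\<bar>m - \<mu>\<bar> < \<delta>0" for m
    using \<delta>0(2)[of m] that \<epsilon> phimu by (cases "m = \<mu>") auto
  define \<delta> where "\<delta> = min \<delta>0 (min (\<mu>/2) 1)"
  have \<delta>: "\<delta> > 0" "\<delta> \<le> \<delta>0" "\<delta> \<le> \<mu>/2" "\<delta> \<le> 1" unfolding \<delta>_def using \<delta>0 mpos by auto
  define \<eta> where "\<eta> = e * b / 4"
  have \<eta>: "\<eta> > 0" unfolding \<eta>_def using e b by simp
  define v where "v = measure_pmf.expectation p (\<lambda>k. (real k - \<mu>)\<^sup>2)"
  define P1 where "P1 n = prob {\<omega>\<in>space M. \<delta> \<le> \<bar>sample_mean X n \<omega> - \<mu>\<bar>}" for n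
  define P3 where "P3 n = prob {\<omega>\<in>space M. K * sqrt (real n) \<le> \<bar>(\<Sum>i<n. gY \<mu> (X i \<omega>)) - real n * cY\<bar>}" for n
  define P4 where "P4 n = prob {\<omega>\<in>space M. sqrt (\<eta> * real n * sqrt (real n)) \<le> \<bar>(\<Sum>i<n. real (X i \<omega>)) - real n * \<mu>\<bar>}" for n
  have P1: "P1 \<longlonglongrightarrow> 0"
    using lln[OF sq \<delta>(1)] unfolding P1_def[abs_def] mu sample_mean_def by simp
  have P3: "P3 n \<le> \<gamma> / 2" if "n > 0" for n
  proof -
    have "P3 n \<le> real n * s / (K * sqrt (real n))\<^sup>2"
      using cheb_sum'[OF gm(1), of "K * sqrt (real n)" n] K that gm(3)
      unfolding P3_def cY_def s_def by simp
    also have "\<dots> = s / K\<^sup>2" using that K by (simp add: power_mult_distrib)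
    finally show ?thesis using K2 by linarith
  qed
  have P4: "P4 \<longlonglongrightarrow> 0"
  proof (rule tendsto0_bound)
    show "(\<lambda>n. v / \<eta> / sqrt (real n)) \<longlonglongrightarrow> 0"
      by (rule tendsto_divide_0[OF tendsto_const filterlim_at_top_imp_at_infinity[OF sqrt_n_at_top]])
    show "\<forall>\<^sub>F n in sequentially. 0 \<le> P4 n \<and> P4 n \<le> v / \<eta> / sqrt (real n)"
      using eventually_gt_at_top[of 0]
    proof eventually_elim
      case (elim n)
      have "P4 n \<le> real n * v / (sqrt (\<eta> * real n * sqrt (real n)))\<^sup>2"
        using cheb_sum'[OF sq, of "sqrt (\<eta> * real n * sqrt (real n))" n] \<eta> elim
        unfolding P4_def v_def mu by simp
      also have "\<dots> = v / \<eta> / sqrt (real n)" using \<eta> elim by (simp add: field_simps)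
      finally show ?case by (simp add: P4_def)
    qed
  qed
  have ev: "eventually (\<lambda>n. n > 0 \<and> exp (2 * (\<mu> + 1)) \<le> sqrt (real n) \<and> P1 n < \<gamma>/4 \<and> P4 n < \<gamma>/4) sequentially"
    using eventually_gt_at_top[of 0] eventually_sqrt_n_ge[of "exp (2 * (\<mu> + 1))"]
      order_tendstoD(2)[OF P1, of "\<gamma>/4"] order_tendstoD(2)[OF P4, of "\<gamma>/4"] \<gamma>
    by (simp add: eventually_conj_iff)
  show "eventually (\<lambda>n. f n \<le> \<gamma>) sequentially"
    using ev
  proof eventually_elim
    case (elim n)
    then have n: "n > 0" "exp (2 * (\<mu> + 1)) \<le> sqrt (real n)" "P1 n < \<gamma>/4" "P4 n < \<gamma>/4" by auto
    let ?A = "{\<omega>\<in>space M. e \<le> \<bar>W_stat X n \<omega> - (\<Sum>i<n. gY \<mu> (X i \<omega>) - measure_pmf.expectation p (gY \<mu>)) / sqrt (real n * (sqrt (sig2 0 \<mu>))\<^sup>2)\<bar>}"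
    let ?B1 = "{\<omega>\<in>space M. \<delta> \<le> \<bar>sample_mean X n \<omega> - \<mu>\<bar>}"
    let ?B3 = "{\<omega>\<in>space M. K * sqrt (real n) \<le> \<bar>(\<Sum>i<n. gY \<mu> (X i \<omega>)) - real n * cY\<bar>}"
    let ?B4 = "{\<omega>\<in>space M. sqrt (\<eta> * real n * sqrt (real n)) \<le> \<bar>(\<Sum>i<n. real (X i \<omega>)) - real n * \<mu>\<bar>}"
    have incl: "?A \<subseteq> ?B1 \<union> (?B3 \<union> ?B4)"
    proof (rule subsetI, rule ccontr)
      fix \<omega> assume A: "\<omega> \<in> ?A" and nB: "\<omega> \<notin> ?B1 \<union> (?B3 \<union> ?B4)"
      have om: "\<omega> \<in> space M" using A by auto
      define Sx where "Sx = (\<Sum>i<n. real (X i \<omega>))"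
      define S0 where "S0 = (\<Sum>i<n. if X i \<omega> \<le> 0 then 1 else (0::real))"
      define m where "m = sample_mean X n \<omega>"
      define F where "F = emp_cdf X n 0 \<omega>"
      have mSx: "Sx = real n * m" unfolding m_def sample_mean_def Sx_def using n by simp
      have FS0: "S0 = real n * F" unfolding F_def emp_cdf_def S0_def using n by simp
      have b1: "\<bar>m - \<mu>\<bar> < \<delta>" using nB om by (auto simp: m_def)
      have b3: "\<bar>(\<Sum>i<n. gY \<mu> (X i \<omega>)) - real n * cY\<bar> < K * sqrt (real n)" using nB om by auto
      have b4: "\<bar>Sx - real n * \<mu>\<bar> < sqrt (\<eta> * real n * sqrt (real n))" using nB om by (auto simp: Sx_def)
      have mm: "m > 0" "m \<le> \<mu> + 1" "\<bar>m - \<mu>\<bar> \<le> 1" "\<bar>m - \<mu>\<bar> < \<delta>0"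
        using b1 \<delta> by (auto simp: abs_less_iff)
      have "exp (2 * m) \<le> exp (2 * (\<mu> + 1))" using mm by simp
      then have ex: "exp (2 * m) \<le> sqrt (real n)" using n by linarith
      have W: "W_stat X n \<omega> = sqrt (real n) * (exp (- m) - F) / sqrt (sig2 0 m)"
        unfolding m_def F_def by (rule W_formula) (use mm ex in \<open>auto simp: m_def\<close>)
      define a where "a = sqrt (sig2 0 m)"
      have a: "a > 0" unfolding a_def using sig2_0_pos[OF mm(1)] by simp
      have pa: "\<bar>1/a - 1/b\<bar> < \<epsilon>" using phi_close[OF mm(4)] unfolding \<phi>_def a_def .
      have pa1: "\<bar>1/a - 1/b\<bar> < e / (2 * K)" using pa unfolding \<epsilon>_def by simp
      have pa2: "1/a \<le> 2/b" using pa unfolding \<epsilon>_def by (simp add: abs_less_iff)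
      define SY where "SY = (\<Sum>i<n. gY \<mu> (X i \<omega>) - cY)"
      have sqb: "sqrt (real n * (sqrt (sig2 0 \<mu>))\<^sup>2) = sqrt (real n) * b"
        using b unfolding b_def s_def by (simp add: real_sqrt_mult)
      have SY1: "SY = (\<Sum>i<n. gY \<mu> (X i \<omega>)) - real n * cY" unfolding SY_def by (simp add: sum_subtractf)
      have gsum: "(\<Sum>i<n. gY \<mu> (X i \<omega>)) = - exp (- \<mu>) * Sx - S0"
        unfolding gY_def Sx_def S0_def by (simp add: sum_subtractf sum_distrib_left)
      have cYv: "cY = - exp (- \<mu>) * \<mu> - exp (- \<mu>)" unfolding cY_def by (rule gm(2))
      have SY2: "SY = real n * (exp (- \<mu>) - exp (- \<mu>) * (m - \<mu>) - F)"
        unfolding SY1 gsum cYv mSx FS0 by (simp add: algebra_simps)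
      define t where "t = SY / sqrt (real n)"
      have sn: "sqrt (real n) > 0" using n by simp
      have t: "t = sqrt (real n) * (exp (- \<mu>) - exp (- \<mu>) * (m - \<mu>) - F)"
      proof -
        have "t = (real n / sqrt (real n)) * (exp (- \<mu>) - exp (- \<mu>) * (m - \<mu>) - F)"
          unfolding t_def SY2 by (simp only: times_divide_eq_left)
        then show ?thesis using real_div_sqrt[of "real n"] by simp
      qed
      have tK: "\<bar>t\<bar> < K"
      proof -
        have "\<bar>SY\<bar> < K * sqrt (real n)" using b3 SY1 by simp
        then show ?thesis unfolding t_def using sn by (simp add: abs_divide divide_less_eq)
      qed
      define R where "R = exp (- m) - exp (- \<mu>) + exp (- \<mu>) * (m - \<mu>)"
      have D: "sqrt (real n) * (exp (- m) - F) = t + sqrt (real n) * R"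
        unfolding t R_def by (simp add: algebra_simps)
      have R: "\<bar>R\<bar> \<le> (m - \<mu>)\<^sup>2"
      proof -
        have Rf: "R = exp (- \<mu>) * (exp (- (m - \<mu>)) - 1 + (m - \<mu>))"
          unfolding R_def by (simp add: algebra_simps flip: exp_add)
        note q = exp_quad_bound[OF mm(3)]
        have "\<bar>R\<bar> = exp (- \<mu>) * (exp (- (m - \<mu>)) - 1 + (m - \<mu>))" unfolding Rf using q(1) by simp
        also have "\<dots> \<le> 1 * (m - \<mu>)\<^sup>2" using q mpos by (intro mult_mono) auto
        finally show ?thesis by simp
      qed
      have small: "sqrt (real n) * (m - \<mu>)\<^sup>2 < \<eta>"
      proof -
        have "(Sx - real n * \<mu>)\<^sup>2 < \<eta> * real n * sqrt (real n)" by (rule abs_lt_sqrt_sq[OF b4])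
        moreover have "(Sx - real n * \<mu>)\<^sup>2 = (real n * sqrt (real n)) * (sqrt (real n) * (m - \<mu>)\<^sup>2)"
          unfolding mSx using n by (simp add: power2_eq_square algebra_simps)
        ultimately have "(real n * sqrt (real n)) * (sqrt (real n) * (m - \<mu>)\<^sup>2) < (real n * sqrt (real n)) * \<eta>"
          by (simp add: mult_ac)
        then show ?thesis using n sn by (simp add: mult_less_cancel_left_pos)
      qed
      have Z: "(\<Sum>i<n. gY \<mu> (X i \<omega>) - measure_pmf.expectation p (gY \<mu>)) / sqrt (real n * (sqrt (sig2 0 \<mu>))\<^sup>2) = t / b"
        unfolding sqb t_def SY_def cY_def by simp
      have "\<bar>(t + sqrt (real n) * R) / a - t / b\<bar> < e"
        by (rule close_aux[OF tK pa1 a pa2 b R]) (use small in \<open>auto simp: \<eta>_def\<close>)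
      moreover have "W_stat X n \<omega> = (t + sqrt (real n) * R) / a" unfolding W D a_def ..
      ultimately show False using A Z by auto
    qed
    have "prob ?A \<le> prob ?B1 + prob (?B3 \<union> ?B4)"
      by (rule prob_le_union2[OF incl]) measurable
    also have "prob (?B3 \<union> ?B4) \<le> prob ?B3 + prob ?B4"
      by (rule measure_Un_le) measurable
    finally have "prob ?A \<le> P1 n + P3 n + P4 n" unfolding P1_def P3_def P4_def by simp
    then show ?case using n P3[OF n(1)] unfolding f_def by linarith
  qed
  qed
  then show ?thesis unfolding f_def[abs_def] .
qed

end


context iid begin

lemma partA:
  assumes sq: "integrable (measure_pmf p) (\<lambda>k. (real k)\<^sup>2)"
    and mu: "measure_pmf.expectation p real = \<mu>" and mpos: "\<mu> > 0" and pp: "p = poisson_pmf \<mu>"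
  shows "weak_conv_m (\<lambda>n. distr M borel (W_stat X n)) std_normal_distribution"
proof (rule slutsky[where Z="\<lambda>n \<omega>. (\<Sum>i<n. gY \<mu> (X i \<omega>) - measure_pmf.expectation p (gY \<mu>)) / sqrt (real n * (sqrt (sig2 0 \<mu>))\<^sup>2)"
      and W="\<lambda>n. W_stat X n"])
  show "(\<lambda>\<omega>. (\<Sum>i<n. gY \<mu> (X i \<omega>) - measure_pmf.expectation p (gY \<mu>)) / sqrt (real n * (sqrt (sig2 0 \<mu>))\<^sup>2)) \<in> borel_measurable M" for n
    by measurable
  show "W_stat X n \<in> borel_measurable M" for n by (rule W_meas)
  show "weak_conv_m (\<lambda>n. distr M borel (\<lambda>\<omega>. (\<Sum>i<n. gY \<mu> (X i \<omega>) - measure_pmf.expectation p (gY \<mu>)) / sqrt (real n * (sqrt (sig2 0 \<mu>))\<^sup>2))) std_normal_distribution"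
    by (rule clt_part[OF sq mu mpos pp])
  show "isCont (cdf std_normal_distribution) x" for x by (rule isCont_cdf_std_normal)
  show "(\<lambda>n. prob {\<omega>\<in>space M. e \<le> \<bar>W_stat X n \<omega> - (\<Sum>i<n. gY \<mu> (X i \<omega>) - measure_pmf.expectation p (gY \<mu>)) / sqrt (real n * (sqrt (sig2 0 \<mu>))\<^sup>2)\<bar>}) \<longlonglongrightarrow> 0"
    if "e > 0" for e
    by (rule close_part[OF sq mu mpos pp that])
qed

end

theorem corollary2:
  fixes M :: "'a measure" and X :: "nat \<Rightarrow> 'a \<Rightarrow> nat" and p :: "nat pmf"
  assumes "prob_space M"
    and "\<And>i. X i \<in> measurable M (count_space UNIV)"
    and "prob_space.indep_vars M (\<lambda>_. count_space UNIV) X UNIV"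
    and "\<And>i. distr M (count_space UNIV) (X i) = measure_pmf p"
    and "integrable (measure_pmf p) (\<lambda>k. (real k)\<^sup>2)"
    and "measure_pmf.expectation p real > 0"
  shows "(p = poisson_pmf (measure_pmf.expectation p real) \<longrightarrow>
            weak_conv_m (\<lambda>n. distr M borel (W_stat X n)) std_normal_distribution)
       \<and> (in_Delta p \<and> (\<forall>r>0. p \<noteq> poisson_pmf r) \<longrightarrow>
            abs_tends_to_infinity_in_prob M (W_stat X))"
proof -
  have "iid M X p" unfolding iid_def iid_axioms_def using assms(1-4) by auto
  then interpret iid M X p .
  define \<mu> where "\<mu> = measure_pmf.expectation p real"
  have mpos: "\<mu> > 0" using assms(6) by (simp add: \<mu>_def)
  have int1: "integrable (measure_pmf p) real"
    by (rule measure_pmf.square_integrable_imp_integrable[OF _ assms(5)]) simp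
  show ?thesis
  proof (intro conjI impI)
    assume "p = poisson_pmf (measure_pmf.expectation p real)"
    then have pp: "p = poisson_pmf \<mu>" by (simp add: \<mu>_def)
    show "weak_conv_m (\<lambda>n. distr M borel (W_stat X n)) std_normal_distribution"
      by (rule partA[OF assms(5) \<mu>_def[symmetric] mpos pp])
  next
    assume H: "in_Delta p \<and> (\<forall>r>0. p \<noteq> poisson_pmf r)"
    have ne: "pmf p 0 \<noteq> exp (- measure_pmf.expectation p real)"
    proof
      assume "pmf p 0 = exp (- measure_pmf.expectation p real)"
      then have "p = poisson_pmf \<mu>"
        using Delta_poisson[OF conjunct1[OF H] int1 \<mu>_def[symmetric] mpos] by (simp add: \<mu>_def)
      with H mpos show False by auto
    qed
    show "abs_tends_to_infinity_in_prob M (W_stat X)"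
      by (rule partB[OF assms(5) assms(6) ne])
  qed
qed


end
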